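(* Let $\pi_1\in\mathfrak{S}_k$ and $\pi_2\in\mathfrak{S}_\ell$ be non-empty permutations and $1\le i\le\operatorname{slmax}(\pi_2)$. Then \begin{align*} \operatorname{lmax}(C_1(\pi_1,\pi_2))=\operatorname{lmax}(C_2(\pi_1,\pi_2,i))&=\operatorname{lmax}(\pi_1)+1,\\ \operatorname{rmax}(C_1(\pi_1,\pi_2))=\operatorname{rmax}(C_2(\pi_1,\pi_2,i))&=1+\operatorname{rmax}(\pi_2),\\ \operatorname{asc}(C_1(\pi_1,\pi_2))=\operatorname{asc}(C_2(\pi_1,\pi_2,i))&=\operatorname{asc}(\pi_1)+1+\operatorname{asc}(\pi_2),\\ \operatorname{des}(C_1(\pi_1,\pi_2))=\operatorname{des}(C_2(\pi_1,\pi_2,i))&=\operatorname{des}(\pi_1)+1+\operatorname{des}(\pi_2),\\ \operatorname{len}(C_1(\pi_1,\pi_2))=\operatorname{len}(C_2(\pi_1,\pi_2,i))&=\operatorname{len}(\pi_1)+1+\operatorname{len}(\pi_2),\\ \operatorname{sldes}(C_1(\pi_1,\pi_2))&=\operatorname{sldes}(\pi_1)+\operatorname{sldes}(\pi_2),\\ \operatorname{sldes}(C_2(\pi_1,\pi_2,i))&=\operatorname{sldes}(\pi_1)+\operatorname{sldes}(\pi_2)+1. \end{align*} Furthermore, when one of $\pi_1,\pi_2$ is empty, the formulas for $C_1(\pi_1,\pi_2)$ still hold, except that $\operatorname{asc}(C_1(\epsilon,\pi_2))=\operatorname{asc}(\pi_2)$ and $\operatorname{des}(C_1(\pi_1,\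epsilon))=\operatorname{des}(\pi_1)$.
   Context: For a finite sequence $A$ of distinct integers, the stack-sorting operator $\mathcal{S}$ is defined by $\mathcal{S}(\epsilon)=\epsilon$ for the empty sequence and, if $A$ is non-empty with largest element $m$, writing $A=A_L\cdot(m)\cdot A_R$ (concatenation), $\mathcal{S}(A)=\mathcal{S}(A_L)\cdot\mathcal{S}(A_R)\cdot(m)$. Permutations are viewed as sequences. For a sequence $\tau$: $\tau^{+k}$ adds $k$ to each element; for $k_1<k_2$, $\tau^{+(k_1,m,k_2)}$ adds $k_1$ to elements strictly smaller than $m$ and $k_2$ to the others. For a permutation $\sigma$: $\operatorname{len}(\sigma)$ is its length; $\operatorname{lmax}(\sigma)$ (resp. $\operatorname{rmax}(\sigma)$) is the number of indices $i$ with $\sigma(i)>\sigma(j)$ for all $j<i$ (resp. all $j>i$); $\operatorname{asc}(\sigma)$ (resp. $\operatorname{des}(\sigma)$) is the number of indices $i$ with $\sigma(i)<\sigma(i+1)$ (resp. $\sigma(i)>\sigma(i+1)$); $\operatorname{slmax}(\sigma)$ is the number of left-to-right maxima of $\mathcal{S}(\sigma)$; $\operatorname{sldes}(\sigma)$ is the number of elements $a$ such that $a$ precedes $a-1$ in $\mathcal{S}(\sigma)$. All these statistics are $0$ on the empty permutation $\epsilon$. For permutations $\pi_1\in\mathfrak{S}_k$, $\pi_2\in\mathfrak{S}_\ell$ (possibly empty, $\mathfrak{S}_0=\{\epsilon\}$), $C_1(\pi_1,\pi_2)=\pi_1\cdot(k+\ell+1)\cdot\pi_2^{+k}$; for non-empty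 $\pi_1,\pi_2$, with $a_1,\dots,a_t$ the values of the left-to-right maxima of $\mathcal{S}(\pi_2)$ in order and $1\le i\le t$, $C_2(\pi_1,\pi_2,i)=\pi_1^{+(0,k,a_i)}\cdot(k+\ell+1)\cdot\pi_2^{+(k-1,a_i+1,k)}$. *)

theory Defs
  imports Main
begin

definition is_perm :: "nat list \<Rightarrow> bool" where
  "is_perm \<sigma> \<longleftrightarrow> distinct \<sigma> \<and> set \<sigma> = {1..length \<sigma>}"

text \<open>Stack-sorting operator: S(A_L m A_R) = S(A_L) S(A_R) m, m the maximum.\<close>

function stack_sort :: "nat list \<Rightarrow> nat list" where
  "stack_sort [] = []"
| "stack_sort (x # xs) =
     (let ys = x # xs; m = Max (set ys);
          L = takeWhile (\<lambda>y. y \<noteq> m) ys;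
          R = tl (dropWhile (\<lambda>y. y \<noteq> m) ys)
      in stack_sort L @ stack_sort R @ [m])"
  by pat_completeness auto
termination
proof (relation "measure length")
  fix x :: nat and xs ys m L
  assume ys: "ys = x # xs" and m: "m = Max (set ys)"
     and L: "L = takeWhile (\<lambda>y. y \<noteq> m) ys"
  have "m \<in> set ys" using ys m by (metis Max_in finite_set list.set_intros(1) empty_iff)
  then show "(L, x # xs) \<in> measure length"
    using L ys takeWhile_eq_all_conv[of "\<lambda>y. y \<noteq> m" ys]
          length_takeWhile_le[of "\<lambda>y. y \<noteq> m" ys]
    by (metis (mono_tags, lifting) in_measure le_neq_implies_less takeWhile_eq_take take_all_iff)
next
  fix x :: nat and xs ys m R
  assume ys: "ys = x # xs"
     and R: "R = tl (dropWhile (\<lambda>y. y \<noteq> m) ys)"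
  have "length (dropWhile (\<lambda>y. y \<noteq> m) ys) \<le> length ys"
    by (simp add: length_dropWhile_le)
  then show "(R, x # xs) \<in> measure length"
    using R ys by simp
qed simp

definition shift :: "nat \<Rightarrow> nat list \<Rightarrow> nat list" where
  "shift k \<tau> = map (\<lambda>x. x + k) \<tau>"

definition shift3 :: "nat \<Rightarrow> nat \<Rightarrow> nat \<Rightarrow> nat list \<Rightarrow> nat list" where
  "shift3 k1 m k2 \<tau> = map (\<lambda>x. if x < m then x + k1 else x + k2) \<tau>"

text \<open>Statistics (lists are 0-indexed here).\<close>

definition lmax :: "nat list \<Rightarrow> nat" where
  "lmax \<sigma> = card {i. i < length \<sigma> \<and> (\<forall>j<i. \<sigma> ! j < \<sigma> ! i)}"

definition rmax :: "nat list \<Rightarrow> nat" where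
  "rmax \<sigma> = card {i. i < length \<sigma> \<and> (\<forall>j. i < j \<and> j < length \<sigma> \<longrightarrow> \<sigma> ! j < \<sigma> ! i)}"

definition asc :: "nat list \<Rightarrow> nat" where
  "asc \<sigma> = card {i. Suc i < length \<sigma> \<and> \<sigma> ! i < \<sigma> ! Suc i}"

definition des :: "nat list \<Rightarrow> nat" where
  "des \<sigma> = card {i. Suc i < length \<sigma> \<and> \<sigma> ! i > \<sigma> ! Suc i}"

definition slmax :: "nat list \<Rightarrow> nat" where
  "slmax \<sigma> = lmax (stack_sort \<sigma>)"

definition sldes :: "nat list \<Rightarrow> nat" where
  "sldes \<sigma> = (let s = stack_sort \<sigma> in
     card {a. \<exists>i j. i < j \<and> j < length s \<and> s ! i = a \<and> s ! j = a - 1})"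

definition lmax_vals :: "nat list \<Rightarrow> nat list" where
  "lmax_vals s = [s ! i. i \<leftarrow> [0..<length s], \<forall>j<i. s ! j < s ! i]"

definition C1 :: "nat list \<Rightarrow> nat list \<Rightarrow> nat list" where
  "C1 \<pi>1 \<pi>2 = \<pi>1 @ [length \<pi>1 + length \<pi>2 + 1] @ shift (length \<pi>1) \<pi>2"

text \<open>C2 with 1-based index i: a_i = lmax_vals (S pi2) ! (i - 1).\<close>

definition C2 :: "nat list \<Rightarrow> nat list \<Rightarrow> nat \<Rightarrow> nat list" where
  "C2 \<pi>1 \<pi>2 i = (let k = length \<pi>1; l = length \<pi>2;
                      a = lmax_vals (stack_sort \<pi>2) ! (i - 1)
                  in shift3 0 k a \<pi>1 @ [k + l + 1] @ shift3 (k - 1) (a + 1) k \<pi>2)"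

end

theory Submission
  imports Defs
begin

lemma card_Suc_split:
  assumes "finite {i::nat. P i}"
  shows "card {i::nat. P i} = (if P 0 then 1 else 0) + card {i. P (Suc i)}"
proof -
  have eq: "{i. P i} = (if P 0 then {0} else {}) \<union> Suc ` {i. P (Suc i)}"
    by (auto simp: image_iff) (metis not0_implies_Suc)+
  have f: "finite {i. P (Suc i)}"
    using finite_vimageI[OF assms, of Suc] by (simp add: vimage_def)
  have d: "(if P 0 then {0} else {}) \<inter> Suc ` {i. P (Suc i)} = {}" by auto
  have "card {i. P i} = card (if P 0 then {0::nat} else {}) + card (Suc ` {i. P (Suc i)})"
    unfolding eq by (rule card_Un_disjoint) (use f d in auto)
  also have "card (Suc ` {i. P (Suc i)}) = card {i. P (Suc i)}"
    by (rule card_image) simp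
  finally show ?thesis by simp
qed

lemma card_top_split:
  "card {i::nat. i < Suc m \<and> Q i} = card {i. i < m \<and> Q i} + (if Q m then 1 else 0)"
proof -
  have eq: "{i. i < Suc m \<and> Q i} = {i. i < m \<and> Q i} \<union> (if Q m then {m} else {})"
    by (auto simp: less_Suc_eq)
  have "card {i. i < Suc m \<and> Q i} = card {i. i < m \<and> Q i} + card (if Q m then {m} else {})"
    unfolding eq by (rule card_Un_disjoint) auto
  then show ?thesis by simp
qed

lemma asc_Cons: "asc (x # s) = (if s \<noteq> [] \<and> x < hd s then 1 else 0) + asc s"
proof -
  have "asc (x # s) = card {i. Suc i < length (x#s) \<and> (x#s) ! i < (x#s) ! Suc i}"
    by (simp add: asc_def)
  also have "\<dots> = (if s \<noteq> [] \<and> x < hd s then 1 else 0) + asc s"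
    by (subst card_Suc_split) (auto simp: asc_def hd_conv_nth)
  finally show ?thesis .
qed

lemma des_Cons: "des (x # s) = (if s \<noteq> [] \<and> hd s < x then 1 else 0) + des s"
proof -
  have "des (x # s) = card {i. Suc i < length (x#s) \<and> (x#s) ! i > (x#s) ! Suc i}"
    by (simp add: des_def)
  also have "\<dots> = (if s \<noteq> [] \<and> hd s < x then 1 else 0) + des s"
    by (subst card_Suc_split) (auto simp: des_def hd_conv_nth)
  finally show ?thesis .
qed

lemma all_Suc_shift: "(\<forall>j. Suc i < j \<and> j < Suc n \<longrightarrow> Q j) \<longleftrightarrow> (\<forall>j. i < j \<and> j < n \<longrightarrow> Q (Suc j))"
  by (metis Suc_less_eq less_Suc_eq_0_disj not_less0)

lemma rmax_Cons: "rmax (x # s) = (if \<forall>y\<in>set s. y < x then 1 else 0) + rmax s"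
proof -
  have "rmax (x # s) = card {i. i < length (x#s) \<and> (\<forall>j. i < j \<and> j < length (x#s) \<longrightarrow> (x#s) ! j < (x#s) ! i)}"
    by (simp add: rmax_def)
  also have "\<dots> = (if \<forall>y\<in>set s. y < x then 1 else 0) + rmax s"
  proof (subst card_Suc_split)
    have a: "(\<forall>j. 0 < j \<and> j < length (x#s) \<longrightarrow> (x#s) ! j < x) \<longleftrightarrow> (\<forall>y\<in>set s. y < x)"
      by (auto simp: all_set_conv_all_nth)
    show "(if 0 < length (x # s) \<and> (\<forall>j. 0 < j \<and> j < length (x # s) \<longrightarrow> (x # s) ! j < (x # s) ! 0) then 1 else 0) +
    card {i. Suc i < length (x # s) \<and> (\<forall>j. Suc i < j \<and> j < length (x # s) \<longrightarrow> (x # s) ! j < (x # s) ! Suc i)} =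
    (if \<forall>y\<in>set s. y < x then 1 else 0) + rmax s"
      using a by (simp add: rmax_def all_Suc_shift del: length_Cons) 
  qed simp
  finally show ?thesis .
qed

lemma lmax_snoc: "lmax (s @ [x]) = lmax s + (if \<forall>y\<in>set s. y < x then 1 else 0)"
proof -
  have "lmax (s @ [x]) = card {i. i < Suc (length s) \<and> (\<forall>j<i. (s@[x]) ! j < (s@[x]) ! i)}"
    by (simp add: lmax_def)
  also have "\<dots> = card {i. i < length s \<and> (\<forall>j<i. (s@[x]) ! j < (s@[x]) ! i)} + (if \<forall>y\<in>set s. y < x then 1 else 0)"
    by (subst card_top_split) (auto simp: nth_append all_set_conv_all_nth)
  also have "{i. i < length s \<and> (\<forall>j<i. (s@[x]) ! j < (s@[x]) ! i)} = {i. i < length s \<and> (\<forall>j<i. s ! j < s ! i)}"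
    by (auto simp: nth_append)
  finally show ?thesis by (simp add: lmax_def)
qed

lemma asc_Nil[simp]: "asc [] = 0" by (simp add: asc_def)
lemma des_Nil[simp]: "des [] = 0" by (simp add: des_def)

lemma asc_append: "asc (X @ Y) = asc X + asc Y + (if X \<noteq> [] \<and> Y \<noteq> [] \<and> last X < hd Y then 1 else 0)"
  by (induction X) (auto simp: asc_Cons)

lemma des_append: "des (X @ Y) = des X + des Y + (if X \<noteq> [] \<and> Y \<noteq> [] \<and> hd Y < last X then 1 else 0)"
  by (induction X) (auto simp: des_Cons)

lemma asc_mid: assumes "\<forall>x\<in>set X \<union> set Y. x < n"
  shows "asc (X @ n # Y) = asc X + (if X = [] then 0 else 1) + asc Y"
proof -
  have h: "Y \<noteq> [] \<Longrightarrow> hd Y < n" using assms by auto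
  then have "\<not> (Y \<noteq> [] \<and> n < hd Y)" by auto
  then have "asc (n # Y) = asc Y" by (simp add: asc_Cons)
  moreover have "asc (X @ n # Y) = asc X + asc (n # Y) + (if X \<noteq> [] \<and> last X < n then 1 else 0)"
    using asc_append[of X "n # Y"] by simp
  moreover have "X \<noteq> [] \<Longrightarrow> last X < n" using assms by auto
  ultimately show ?thesis by auto
qed

lemma des_mid: assumes "\<forall>x\<in>set X \<union> set Y. x < n"
  shows "des (X @ n # Y) = des X + (if Y = [] then 0 else 1) + des Y"
proof -
  have "Y \<noteq> [] \<Longrightarrow> hd Y < n" using assms by auto
  then have "des (n # Y) = (if Y = [] then 0 else 1) + des Y" using assms by (auto simp: des_Cons)
  moreover have "X \<noteq> [] \<Longrightarrow> last X < n" using assms by auto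
  ultimately show ?thesis using assms by (auto simp: des_append less_not_sym)
qed

lemma rmax_mid: assumes "\<forall>x\<in>set X \<union> set Y. x < n"
  shows "rmax (X @ n # Y) = 1 + rmax Y"
  using assms
proof (induction X)
  case Nil
  then show ?case by (simp add: rmax_Cons)
next
  case (Cons x X)
  then show ?case by (auto simp: rmax_Cons)
qed

lemma lmax_mid: assumes "\<forall>x\<in>set X \<union> set Y. x < n"
  shows "lmax (X @ n # Y) = lmax X + 1"
  using assms
proof (induction Y rule: rev_induct)
  case Nil
  then show ?case using lmax_snoc[of X n] by simp
next
  case (snoc y Y)
  have "lmax (X @ n # Y @ [y]) = lmax (X @ n # Y) + 0"
    using lmax_snoc[of "X @ n # Y" y] snoc.prems by auto
  then show ?case using snoc by simp
qed

lemma lmax_map: "strict_mono f \<Longrightarrow> lmax (map f s) = lmax s"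
  unfolding lmax_def by (intro arg_cong[where f=card] Collect_cong) (auto simp: strict_mono_less)
lemma rmax_map: "strict_mono f \<Longrightarrow> rmax (map f s) = rmax s"
  unfolding rmax_def by (intro arg_cong[where f=card] Collect_cong) (auto simp: strict_mono_less)
lemma asc_map: "strict_mono f \<Longrightarrow> asc (map f s) = asc s"
  unfolding asc_def by (intro arg_cong[where f=card] Collect_cong) (auto simp: strict_mono_less)
lemma des_map: "strict_mono f \<Longrightarrow> des (map f s) = des s"
  unfolding des_def by (intro arg_cong[where f=card] Collect_cong) (auto simp: strict_mono_less)

lemma ss_ne: "ys \<noteq> [] \<Longrightarrow> stack_sort ys =
   stack_sort (takeWhile (\<lambda>y. y \<noteq> Max (set ys)) ys) @
   stack_sort (tl (dropWhile (\<lambda>y. y \<noteq> Max (set ys)) ys)) @ [Max (set ys)]"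
  by (cases ys) (simp_all add: Let_def)

lemma ss_split: assumes "n \<notin> set A" "\<forall>x\<in>set A \<union> set B. x \<le> n"
  shows "stack_sort (A @ n # B) = stack_sort A @ stack_sort B @ [n]"
proof -
  have M: "Max (set (A @ n # B)) = n"
    using assms by (intro Max_eqI) auto
  have t: "takeWhile (\<lambda>y. y \<noteq> n) (A @ n # B) = A"
    using assms(1) by (subst takeWhile_append2) auto
  have d: "dropWhile (\<lambda>y. y \<noteq> n) (A @ n # B) = n # B"
    using assms(1) by (subst dropWhile_append2) auto
  show ?thesis using ss_ne[of "A @ n # B"] M t d by simp
qed

lemma decomp: assumes "ys \<noteq> []"
  obtains A B where "ys = A @ Max (set ys) # B" "Max (set ys) \<notin> set A"
    "\<forall>x\<in>set A \<union> set B. x \<le> Max (set ys)"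
proof -
  have "Max (set ys) \<in> set ys" using assms by simp
  then obtain A B where "ys = A @ Max (set ys) # B" "Max (set ys) \<notin> set A"
    using split_list_first by metis
  moreover have "\<forall>x\<in>set ys. x \<le> Max (set ys)" by simp
  ultimately show ?thesis using that by (metis Un_iff set_append set_subset_Cons subsetD)
qed

lemma ss_props: "set (stack_sort ys) = set ys \<and> length (stack_sort ys) = length ys \<and>
   (distinct ys \<longrightarrow> distinct (stack_sort ys))"
proof (induction ys rule: length_induct)
  case (1 ys)
  show ?case
  proof (cases "ys = []")
    case True then show ?thesis by simp
  next
    case False
    then obtain A B where d: "ys = A @ Max (set ys) # B" "Max (set ys) \<notin> set A"
      "\<forall>x\<in>set A \<union> set B. x \<le> Max (set ys)" by (rule decomp)
    have lA: "length A < length ys" and lB: "length B < length ys"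
      by (subst d(1); simp)+
    have s: "stack_sort ys = stack_sort A @ stack_sort B @ [Max (set ys)]"
      using ss_split[OF d(2) d(3)] d(1) by simp
    have IA: "set (stack_sort A) = set A \<and> length (stack_sort A) = length A \<and>
   (distinct A \<longrightarrow> distinct (stack_sort A))" using 1 lA by blast
    have IB: "set (stack_sort B) = set B \<and> length (stack_sort B) = length B \<and>
   (distinct B \<longrightarrow> distinct (stack_sort B))" using 1 lB by blast
    have st: "set (stack_sort ys) = set ys" unfolding s using IA IB by (subst d(1)) auto
    have ln: "length (stack_sort ys) = length ys" unfolding s using IA IB by (subst d(1)) auto
    have ds: "distinct ys \<longrightarrow> distinct (stack_sort ys)"
    proof
      assume "distinct ys"
      then have "distinct (A @ Max (set ys) # B)" using d(1) by simp
      then show "distinct (stack_sort ys)" unfolding s using IA IB by auto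
    qed
    show ?thesis using st ln ds by blast
  qed
qed

lemma ss_map: "strict_mono f \<Longrightarrow> stack_sort (map f ys) = map f (stack_sort ys)"
proof (induction ys rule: length_induct)
  case (1 ys)
  show ?case
  proof (cases "ys = []")
    case True then show ?thesis by simp
  next
    case False
    then obtain A B where d: "ys = A @ Max (set ys) # B" "Max (set ys) \<notin> set A"
      "\<forall>x\<in>set A \<union> set B. x \<le> Max (set ys)" by (rule decomp)
    define m where "m = Max (set ys)"
    have lA: "length A < length ys" and lB: "length B < length ys"
      by (subst d(1); simp)+
    have s: "stack_sort ys = stack_sort A @ stack_sort B @ [m]"
      using ss_split[OF d(2) d(3)] d(1) m_def by simp
    have inj: "inj f" using 1(2) strict_mono_imp_inj_on by blast
    have n1: "f m \<notin> set (map f A)" using d(2) inj m_def by (auto simp: inj_eq)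
    have n2: "\<forall>x\<in>set (map f A) \<union> set (map f B). x \<le> f m"
      using d(3) 1(2) m_def by (auto simp: strict_mono_less_eq)
    have "map f ys = map f A @ f m # map f B" using d(1) m_def by (metis list.simps(9) map_append)
    then have "stack_sort (map f ys) = stack_sort (map f A) @ stack_sort (map f B) @ [f m]"
      using ss_split[OF n1 n2] by simp
    also have "\<dots> = map f (stack_sort A) @ map f (stack_sort B) @ [f m]"
      using 1 lA lB by simp
    finally show ?thesis using s by simp
  qed
qed


definition prec :: "nat list \<Rightarrow> nat \<Rightarrow> nat \<Rightarrow> bool" where
  "prec s a b \<longleftrightarrow> (\<exists>i j. i < j \<and> j < length s \<and> s ! i = a \<and> s ! j = b)"

definition Dc :: "nat list \<Rightarrow> nat" where
  "Dc s = card {a. prec s a (a - 1)}"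

lemma sldes_Dc: "sldes \<sigma> = Dc (stack_sort \<sigma>)"
  by (simp add: sldes_def Dc_def prec_def Let_def)

lemma prec_Nil[simp]: "\<not> prec [] a b" by (simp add: prec_def)

lemma prec_Cons: "prec (x # s) a b \<longleftrightarrow> (a = x \<and> b \<in> set s) \<or> prec s a b"
proof
  assume "prec (x # s) a b"
  then obtain i j where ij: "i < j" "j < length (x # s)" "(x#s) ! i = a" "(x#s) ! j = b"
    by (auto simp: prec_def)
  obtain j' where j': "j = Suc j'" using ij(1) by (cases j) auto
  show "(a = x \<and> b \<in> set s) \<or> prec s a b"
  proof (cases i)
    case 0
    then show ?thesis using ij j' by auto
  next
    case (Suc i')
    then have "prec s a b" unfolding prec_def using ij j'
      by (intro exI[of _ i'] exI[of _ j']) auto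
    then show ?thesis by blast
  qed
next
  assume "(a = x \<and> b \<in> set s) \<or> prec s a b"
  then show "prec (x # s) a b"
  proof
    assume "a = x \<and> b \<in> set s"
    then obtain j where "j < length s" "s ! j = b" "a = x" by (auto simp: in_set_conv_nth)
    then show ?thesis unfolding prec_def by (intro exI[of _ 0] exI[of _ "Suc j"]) auto
  next
    assume "prec s a b"
    then obtain i j where "i < j" "j < length s" "s ! i = a" "s ! j = b" by (auto simp: prec_def)
    then show ?thesis unfolding prec_def by (intro exI[of _ "Suc i"] exI[of _ "Suc j"]) auto
  qed
qed

lemma prec_append: "prec (X @ Y) a b \<longleftrightarrow> prec X a b \<or> prec Y a b \<or> (a \<in> set X \<and> b \<in> set Y)"
  by (induction X) (auto simp: prec_Cons)

lemma prec_set: "prec s a b \<Longrightarrow> a \<in> set s \<and> b \<in> set s"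
  by (auto simp: prec_def)

lemma prec_map: "prec (map f s) c d \<longleftrightarrow> (\<exists>x y. prec s x y \<and> c = f x \<and> d = f y)"
proof
  assume "prec (map f s) c d"
  then obtain i j where "i < j" "j < length s" "f (s ! i) = c" "f (s ! j) = d" by (auto simp: prec_def)
  then show "\<exists>x y. prec s x y \<and> c = f x \<and> d = f y" unfolding prec_def by blast
next
  assume "\<exists>x y. prec s x y \<and> c = f x \<and> d = f y"
  then obtain i j where "i < j" "j < length s" "c = f (s ! i)" "d = f (s ! j)" by (auto simp: prec_def)
  then show "prec (map f s) c d" unfolding prec_def by (intro exI[of _ i] exI[of _ j]) simp
qed

lemma Dc_map:
  assumes inj: "inj_on f (set s)"
    and H: "\<And>x y. x \<in> set s \<Longrightarrow> y \<in> set s \<Longrightarrow> prec s x y \<Longrightarrow> (f x - 1 = f y \<longleftrightarrow> x - 1 = y)"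
  shows "Dc (map f s) = Dc s"
proof -
  have eq: "{c. prec (map f s) c (c - 1)} = f ` {a. prec s a (a - 1)}"
  proof
    show "{c. prec (map f s) c (c - 1)} \<subseteq> f ` {a. prec s a (a - 1)}"
    proof
      fix c assume "c \<in> {c. prec (map f s) c (c - 1)}"
      then obtain x y where xy: "prec s x y" "c = f x" "c - 1 = f y" by (auto simp: prec_map)
      then have "x - 1 = y" using H prec_set by blast
      then show "c \<in> f ` {a. prec s a (a - 1)}" using xy by auto
    qed
  next
    show "f ` {a. prec s a (a - 1)} \<subseteq> {c. prec (map f s) c (c - 1)}"
    proof
      fix c assume "c \<in> f ` {a. prec s a (a - 1)}"
      then obtain x where x: "prec s x (x - 1)" "c = f x" by auto
      then have "f x - 1 = f (x - 1)" using H prec_set by blast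
      then show "c \<in> {c. prec (map f s) c (c - 1)}" using x by (auto simp: prec_map)
    qed
  qed
  have "inj_on f {a. prec s a (a - 1)}"
    using inj by (rule inj_on_subset) (auto dest: prec_set)
  then show ?thesis unfolding Dc_def eq by (simp add: card_image)
qed

lemma Dc_split:
  assumes d: "set X \<inter> set Y = {}" and b: "\<forall>x\<in>set X \<union> set Y. x < n"
  shows "Dc (X @ Y @ [n]) = Dc X + Dc Y + card {a \<in> set X. a - 1 \<in> set Y}"
proof -
  have eq: "{a. prec (X @ Y @ [n]) a (a - 1)} =
     ({a. prec X a (a - 1)} \<union> {a. prec Y a (a - 1)}) \<union> {a \<in> set X. a - 1 \<in> set Y}"
  proof -
    have c: "(a - 1 = n) = False" if "a \<in> set X \<union> set Y" for a
    proof -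
      have "a < n" using b that by blast
      then show ?thesis by simp
    qed
    show ?thesis using c by (auto simp: prec_append prec_Cons)
  qed
  have fX: "finite {a. prec X a (a - 1)}" by (rule finite_subset[of _ "set X"]) (auto dest: prec_set)
  have fY: "finite {a. prec Y a (a - 1)}" by (rule finite_subset[of _ "set Y"]) (auto dest: prec_set)
  have fC: "finite {a \<in> set X. a - 1 \<in> set Y}" by simp
  have d1: "{a. prec X a (a - 1)} \<inter> {a. prec Y a (a - 1)} = {}" using d by (auto dest: prec_set)
  have d2: "({a. prec X a (a - 1)} \<union> {a. prec Y a (a - 1)}) \<inter> {a \<in> set X. a - 1 \<in> set Y} = {}"
    using d by (auto dest: prec_set)
  show ?thesis unfolding Dc_def eq
    using card_Un_disjoint[OF finite_UnI[OF fX fY] fC d2] card_Un_disjoint[OF fX fY d1] by simp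
qed


lemma D_C1:
  assumes "set S1 = {1..k}" "set S2 = {1..l}"
  shows "Dc (S1 @ map (\<lambda>x. x + k) S2 @ [k + l + 1]) = Dc S1 + Dc S2"
proof -
  have m: "Dc (map (\<lambda>x. x + k) S2) = Dc S2"
  proof (rule Dc_map)
    show "inj_on (\<lambda>x. x + k) (set S2)" by (simp add: inj_on_def)
    fix x y assume "x \<in> set S2" "y \<in> set S2"
    then show "(x + k - 1 = y + k) = (x - 1 = y)" using assms by auto
  qed
  have c: "{a \<in> set S1. a - 1 \<in> set (map (\<lambda>x. x + k) S2)} = {}" using assms by auto
  have "Dc (S1 @ map (\<lambda>x. x + k) S2 @ [k + l + 1]) =
      Dc S1 + Dc (map (\<lambda>x. x + k) S2) + card {a \<in> set S1. a - 1 \<in> set (map (\<lambda>x. x + k) S2)}"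
    by (rule Dc_split) (use assms in auto)
  then show ?thesis using m c by simp
qed

lemma D_C2:
  assumes s1: "set S1 = {1..k}" and s2: "set S2 = {1..l}" and k: "1 \<le> k"
    and a: "1 \<le> a" "a \<le> l"
    and n1: "\<And>y. \<not> prec S1 k y" and n2: "\<not> prec S2 (a + 1) a"
    and g: "g = (\<lambda>x. if x < k then x + 0 else x + a)"
    and h: "h = (\<lambda>x. if x < a + 1 then x + (k - 1) else x + k)"
  shows "Dc (map g S1 @ map h S2 @ [k + l + 1]) = Dc S1 + Dc S2 + 1"
proof -
  have sg: "strict_mono g" unfolding g by (auto simp: strict_mono_def)
  have sh: "strict_mono h" unfolding h by (auto simp: strict_mono_def)
  have mg: "Dc (map g S1) = Dc S1"
  proof (rule Dc_map)
    show "inj_on g (set S1)" using sg strict_mono_imp_inj_on inj_on_subset by blast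
    fix x y assume xy: "x \<in> set S1" "y \<in> set S1" "prec S1 x y"
    then have "x \<noteq> k" using n1 by blast
    then have "x < k" using xy s1 by auto
    then show "(g x - 1 = g y) = (x - 1 = y)" using xy s1 a unfolding g by auto
  qed
  have mh: "Dc (map h S2) = Dc S2"
  proof (rule Dc_map)
    show "inj_on h (set S2)" using sh strict_mono_imp_inj_on inj_on_subset by blast
    fix x y assume xy: "x \<in> set S2" "y \<in> set S2" "prec S2 x y"
    then have "\<not> (x = a + 1 \<and> y = a)" using n2 by blast
    then show "(h x - 1 = h y) = (x - 1 = y)" using xy s2 a k unfolding h by auto
  qed
  have c: "{c \<in> set (map g S1). c - 1 \<in> set (map h S2)} = {k + a}"
  proof
    show "{k + a} \<subseteq> {c \<in> set (map g S1). c - 1 \<in> set (map h S2)}"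
    proof -
      have "g k = k + a" unfolding g by simp
      moreover have "h a = k + a - 1" unfolding h using k by simp
      moreover have "k \<in> set S1" "a \<in> set S2" using s1 s2 k a by auto
      ultimately have "k + a \<in> set (map g S1)" "k + a - 1 \<in> set (map h S2)"
        by (metis image_eqI set_map)+
      then show ?thesis by simp
    qed
  next
    show "{c \<in> set (map g S1). c - 1 \<in> set (map h S2)} \<subseteq> {k + a}"
    proof
      fix c assume "c \<in> {c \<in> set (map g S1). c - 1 \<in> set (map h S2)}"
      then obtain x y where xy: "x \<in> {1..k}" "y \<in> {1..l}" "c = g x" "c - 1 = h y"
        using s1 s2 by auto
      show "c \<in> {k + a}"
      proof (cases "x < k")
        case True
        then have "c = x" using xy unfolding g by simp
        moreover have "h y \<ge> k" using xy k unfolding h by auto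
        ultimately show ?thesis using xy True by auto
      next
        case False
        then show ?thesis using xy unfolding g by auto
      qed
    qed
  qed
  have dj: "set (map g S1) \<inter> set (map h S2) = {}"
  proof -
    have "g x \<noteq> h y" if "x \<in> {1..k}" "y \<in> {1..l}" for x y
      using that k a unfolding g h by auto
    then show ?thesis using s1 s2 by auto
  qed
  have bd: "\<forall>x\<in>set (map g S1) \<union> set (map h S2). x < k + l + 1"
    using s1 s2 a unfolding g h by auto
  have "Dc (map g S1 @ map h S2 @ [k + l + 1]) = Dc (map g S1) + Dc (map h S2) + card {c \<in> set (map g S1). c - 1 \<in> set (map h S2)}"
    by (rule Dc_split[OF dj bd])
  then show ?thesis using mg mh c by simp
qed

lemma concat_filter_map: "concat (map (\<lambda>x. if P x then [f x] else []) xs) = map f (filter P xs)"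
  by (induction xs) auto

lemma lmax_vals_prop:
  assumes "j < lmax s"
  shows "\<exists>p<length s. lmax_vals s ! j = s ! p \<and> (\<forall>q<p. s ! q < s ! p)"
proof -
  define P where "P = (\<lambda>i. \<forall>j<i. s ! j < s ! i)"
  have lv: "lmax_vals s = map (\<lambda>i. s ! i) (filter P [0..<length s])"
    unfolding lmax_vals_def P_def by (simp add: concat_filter_map)
  have len: "length (filter P [0..<length s]) = lmax s"
    unfolding length_filter_conv_card lmax_def P_def
    by (intro arg_cong[where f=card] Collect_cong) auto
  define p where "p = filter P [0..<length s] ! j"
  have "p \<in> set (filter P [0..<length s])" unfolding p_def using assms len by (metis nth_mem)
  then have "p < length s" "P p" by auto
  moreover have "lmax_vals s ! j = s ! p" unfolding lv p_def using assms len by simp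
  ultimately show ?thesis unfolding P_def by blast
qed


lemma sm_add: "strict_mono (\<lambda>x::nat. x + k)" by (simp add: strict_mono_def)

lemma last_not_prec:
  assumes "xs \<noteq> []" "set xs = {1..k}" "distinct xs"
  shows "\<not> prec (stack_sort xs) k y"
proof -
  have Mk: "Max (set xs) = k" using assms by (cases "k = 0") (auto intro: Max_eqI)
  obtain A B where d: "xs = A @ Max (set xs) # B" "Max (set xs) \<notin> set A"
      "\<forall>x\<in>set A \<union> set B. x \<le> Max (set xs)" using assms(1) by (rule decomp)
  have s: "stack_sort xs = (stack_sort A @ stack_sort B) @ [k]"
    using ss_split[OF d(2) d(3)] d(1) Mk by simp
  show ?thesis
  proof
    assume "prec (stack_sort xs) k y"
    then have "prec (stack_sort A @ stack_sort B) k y \<or> k \<in> set (stack_sort A @ stack_sort B)"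
      unfolding s prec_append by (auto simp: prec_Cons)
    then have "k \<in> set (stack_sort A @ stack_sort B)" using prec_set by blast
    then have "k \<in> set A \<or> k \<in> set B" using ss_props by auto
    then show False using d Mk assms(3) by (metis distinct_append distinct.simps(2) disjoint_iff list.set_intros(1))
  qed
qed

theorem proposition9:
  fixes \<pi>1 \<pi>2 :: "nat list"
  assumes "is_perm \<pi>1" and "is_perm \<pi>2"
  shows "(\<pi>1 \<noteq> [] \<and> \<pi>2 \<noteq> [] \<longrightarrow>
           (\<forall>i. 1 \<le> i \<and> i \<le> slmax \<pi>2 \<longrightarrow>
              lmax (C1 \<pi>1 \<pi>2) = lmax \<pi>1 + 1 \<and> lmax (C2 \<pi>1 \<pi>2 i) = lmax \<pi>1 + 1 \<and>
              rmax (C1 \<pi>1 \<pi>2) = 1 + rmax \<pi>2 \<and> rmax (C2 \<pi>1 \<pi>2 i) = 1 + rmax \<pi>2 \<and>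
              asc (C1 \<pi>1 \<pi>2) = asc \<pi>1 + 1 + asc \<pi>2 \<and>
              asc (C2 \<pi>1 \<pi>2 i) = asc \<pi>1 + 1 + asc \<pi>2 \<and>
              des (C1 \<pi>1 \<pi>2) = des \<pi>1 + 1 + des \<pi>2 \<and>
              des (C2 \<pi>1 \<pi>2 i) = des \<pi>1 + 1 + des \<pi>2 \<and>
              length (C1 \<pi>1 \<pi>2) = length \<pi>1 + 1 + length \<pi>2 \<and>
              length (C2 \<pi>1 \<pi>2 i) = length \<pi>1 + 1 + length \<pi>2 \<and>
              sldes (C1 \<pi>1 \<pi>2) = sldes \<pi>1 + sldes \<pi>2 \<and>
              sldes (C2 \<pi>1 \<pi>2 i) = sldes \<pi>1 + sldes \<pi>2 + 1))
       \<and> (\<pi>1 = [] \<or> \<pi>2 = [] \<longrightarrow>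
              lmax (C1 \<pi>1 \<pi>2) = lmax \<pi>1 + 1 \<and>
              rmax (C1 \<pi>1 \<pi>2) = 1 + rmax \<pi>2 \<and>
              asc (C1 \<pi>1 \<pi>2) = (if \<pi>1 = [] then asc \<pi>2 else asc \<pi>1 + 1 + asc \<pi>2) \<and>
              des (C1 \<pi>1 \<pi>2) = (if \<pi>2 = [] then des \<pi>1 else des \<pi>1 + 1 + des \<pi>2) \<and>
              length (C1 \<pi>1 \<pi>2) = length \<pi>1 + 1 + length \<pi>2 \<and>
              sldes (C1 \<pi>1 \<pi>2) = sldes \<pi>1 + sldes \<pi>2)"
proof -
  define k where "k = length \<pi>1"
  define l where "l = length \<pi>2"
  define n where "n = k + l + 1"
  define S1 where "S1 = stack_sort \<pi>1"
  define S2 where "S2 = stack_sort \<pi>2"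
  have p1: "distinct \<pi>1" "set \<pi>1 = {1..k}" using assms(1) unfolding is_perm_def k_def by auto
  have p2: "distinct \<pi>2" "set \<pi>2 = {1..l}" using assms(2) unfolding is_perm_def l_def by auto
  have q1: "distinct S1" "set S1 = {1..k}" using p1 ss_props unfolding S1_def by auto
  have q2: "distinct S2" "set S2 = {1..l}" using p2 ss_props unfolding S2_def by auto
  define f where "f = (\<lambda>x::nat. x + k)"
  have sf: "strict_mono f" unfolding f_def by (rule sm_add)
  have c1: "C1 \<pi>1 \<pi>2 = \<pi>1 @ n # map f \<pi>2"
    unfolding C1_def shift_def n_def k_def l_def f_def by simp
  have b1: "\<forall>x\<in>set \<pi>1 \<union> set (map f \<pi>2). x < n"
    using p1 p2 unfolding n_def f_def by auto
  have L1: "lmax (C1 \<pi>1 \<pi>2) = lmax \<pi>1 + 1" unfolding c1 by (rule lmax_mid[OF b1])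
  have R1: "rmax (C1 \<pi>1 \<pi>2) = 1 + rmax \<pi>2" unfolding c1 rmax_mid[OF b1] rmax_map[OF sf] ..
  have A1: "asc (C1 \<pi>1 \<pi>2) = asc \<pi>1 + (if \<pi>1 = [] then 0 else 1) + asc \<pi>2"
    unfolding c1 asc_mid[OF b1] asc_map[OF sf] ..
  have D1: "des (C1 \<pi>1 \<pi>2) = des \<pi>1 + (if \<pi>2 = [] then 0 else 1) + des \<pi>2"
    unfolding c1 des_mid[OF b1] des_map[OF sf] by simp
  have N1: "length (C1 \<pi>1 \<pi>2) = length \<pi>1 + 1 + length \<pi>2" unfolding c1 by simp
  have SS1: "stack_sort (C1 \<pi>1 \<pi>2) = S1 @ map f S2 @ [n]"
  proof -
    have "n \<notin> set \<pi>1" using b1 by auto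
    moreover have "\<forall>x\<in>set \<pi>1 \<union> set (map f \<pi>2). x \<le> n" using b1 by (meson less_imp_le)
    ultimately show ?thesis unfolding c1 S1_def S2_def
      using ss_split ss_map[OF sf] by simp
  qed
  have E1: "sldes (C1 \<pi>1 \<pi>2) = sldes \<pi>1 + sldes \<pi>2"
    unfolding sldes_Dc SS1 using D_C1[OF q1(2) q2(2)] unfolding f_def n_def S1_def S2_def by simp
  have part2: "lmax (C2 \<pi>1 \<pi>2 i) = lmax \<pi>1 + 1 \<and>
              rmax (C2 \<pi>1 \<pi>2 i) = 1 + rmax \<pi>2 \<and>
              asc (C2 \<pi>1 \<pi>2 i) = asc \<pi>1 + 1 + asc \<pi>2 \<and>
              des (C2 \<pi>1 \<pi>2 i) = des \<pi>1 + 1 + des \<pi>2 \<and>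
              length (C2 \<pi>1 \<pi>2 i) = length \<pi>1 + 1 + length \<pi>2 \<and>
              sldes (C2 \<pi>1 \<pi>2 i) = sldes \<pi>1 + sldes \<pi>2 + 1"
    if ne: "\<pi>1 \<noteq> []" "\<pi>2 \<noteq> []" and i: "1 \<le> i" "i \<le> slmax \<pi>2" for i
  proof -
    define a where "a = lmax_vals S2 ! (i - 1)"
    have "i - 1 < lmax S2" using i unfolding slmax_def S2_def by simp
    then obtain p where pp: "p < length S2" "a = S2 ! p" "\<forall>q<p. S2 ! q < S2 ! p"
      using lmax_vals_prop unfolding a_def by blast
    have "a \<in> set S2" using pp by simp
    then have a1: "1 \<le> a" "a \<le> l" using q2 by auto
    have k1: "1 \<le> k" using ne unfolding k_def by (cases \<pi>1) auto
    have n2: "\<not> prec S2 (a + 1) a"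
    proof
      assume "prec S2 (a + 1) a"
      then obtain i' j' where ij: "i' < j'" "j' < length S2" "S2 ! i' = a + 1" "S2 ! j' = a"
        unfolding prec_def by blast
      have "j' = p" using ij pp q2(1) nth_eq_iff_index_eq by metis
      then show False using ij pp by fastforce
    qed
    have n1: "\<And>y. \<not> prec S1 k y" unfolding S1_def using last_not_prec[OF ne(1) p1(2) p1(1)] by blast
    define g where "g = (\<lambda>x::nat. if x < k then x + 0 else x + a)"
    define h where "h = (\<lambda>x::nat. if x < a + 1 then x + (k - 1) else x + k)"
    have sg: "strict_mono g" unfolding g_def by (auto simp: strict_mono_def)
    have sh: "strict_mono h" unfolding h_def by (auto simp: strict_mono_def)
    have c2: "C2 \<pi>1 \<pi>2 i = map g \<pi>1 @ n # map h \<pi>2"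
      unfolding C2_def Let_def shift3_def g_def h_def a_def n_def k_def l_def S2_def by simp
    have b2: "\<forall>x\<in>set (map g \<pi>1) \<union> set (map h \<pi>2). x < n"
      using p1 p2 a1 unfolding n_def g_def h_def by auto
    have L2: "lmax (C2 \<pi>1 \<pi>2 i) = lmax \<pi>1 + 1" unfolding c2 lmax_mid[OF b2] lmax_map[OF sg] ..
    have R2: "rmax (C2 \<pi>1 \<pi>2 i) = 1 + rmax \<pi>2" unfolding c2 rmax_mid[OF b2] rmax_map[OF sh] ..
    have A2: "asc (C2 \<pi>1 \<pi>2 i) = asc \<pi>1 + 1 + asc \<pi>2"
      unfolding c2 asc_mid[OF b2] asc_map[OF sg] asc_map[OF sh] using ne by simp
    have D2: "des (C2 \<pi>1 \<pi>2 i) = des \<pi>1 + 1 + des \<pi>2"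
      unfolding c2 des_mid[OF b2] des_map[OF sg] des_map[OF sh] using ne by simp
    have N2: "length (C2 \<pi>1 \<pi>2 i) = length \<pi>1 + 1 + length \<pi>2" unfolding c2 by simp
    have SS2: "stack_sort (C2 \<pi>1 \<pi>2 i) = map g S1 @ map h S2 @ [n]"
    proof -
      have "n \<notin> set (map g \<pi>1)" using b2 by auto
      moreover have "\<forall>x\<in>set (map g \<pi>1) \<union> set (map h \<pi>2). x \<le> n" using b2 by (meson less_imp_le)
      ultimately show ?thesis unfolding c2 S1_def S2_def
        using ss_split ss_map[OF sg] ss_map[OF sh] by simp
    qed
    have E2: "sldes (C2 \<pi>1 \<pi>2 i) = sldes \<pi>1 + sldes \<pi>2 + 1"
      unfolding sldes_Dc SS2 using D_C2[OF q1(2) q2(2) k1 a1 n1 n2 g_def h_def]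
      unfolding n_def S1_def S2_def by simp
    show ?thesis using L2 R2 A2 D2 N2 E2 by blast
  qed
  show ?thesis using L1 R1 A1 D1 N1 E1 part2 by auto
qed

end
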